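(* Let $\Phi$ be an N-function. For every positive integer $n$ and every integer $s$ with $0\le s<n/2$, $K_{n,s}$ is a bounded linear operator on $L_\Phi^*(\triangle)$ with $\|K_{n,s}(f)\|_\Phi\le 12\|f\|_\Phi$ for all $f\in L_\Phi^*(\triangle)$, i.e. $\|K_{n,s}\|_\Phi\le 12$.
   Context: $\triangle=\{x=(x_1,x_2)\in\mathbb R^2: x_1+x_2\le 1,\ x_1,x_2\ge 0\}$. $\Phi$ is an N-function with complementary N-function $\Psi$. The Orlicz space $L_\Phi^*(\triangle)$ consists of all Lebesgue measurable $f$ on $\triangle$ such that $\int_\triangle f g\,dx$ is finite for every measurable $g$ with $\int_\triangle\Psi(g(x))\,dx<\infty$, with the Orlicz norm $\|f\|_\Phi=\sup\{|\int_\triangle f(x)g(x)\,dx| : \int_\triangle \Psi(g(x))\,dx\le 1\}=\inf_{\alpha>0}\frac1\alpha\{1+\int_\triangle\Phi(\alpha f(x))\,dx\}$. Stancu–Kantorovič operator: for $x\in\triangle$, $n\in\mathbb Z^+$, integer $0\le s<n/2$, $K_{n,s}(f;x)=\sum_{k+l\le n} b_{n,k,l,s}(x)\,(n+2)^2\int_{I_{n,k,l}} f(u)\,du$ (sum over integers $k,l\ge 0$), where $I_{n,k,l}=\left[\frac{k}{n+2},\frac{k+1}{n+2}\right]\times\left[\frac{l}{n+2},\frac{l+1}{n+2}\right]$, $p_{m,k,l}(x)=\frac{m!}{k!\,l!\,(m-k-l)!}x_1^kx_2^l(1-x_1-x_2)^{m-k-l}$ for integers $k,l\ge0$, $k+l\le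 m$, and $p_{m,k,l}:=0$ otherwise (i.e. if $k<0$, $l<0$ or $k+l>m$), and $b_{n,k,l,s}(x)=(1-x_1-x_2)\,p_{n-s,k,l}(x)+x_1\,p_{n-s,k-s,l}(x)+x_2\,p_{n-s,k,l-s}(x)$. *)

theory Defs
  imports "HOL-Analysis.Analysis"
begin

definition triangle :: "(real \<times> real) set" where
  "triangle = {x. fst x + snd x \<le> 1 \<and> fst x \<ge> 0 \<and> snd x \<ge> 0}"

definition N_function :: "(real \<Rightarrow> real) \<Rightarrow> bool" where
  "N_function \<Phi> \<longleftrightarrow> convex_on UNIV \<Phi> \<and> (\<forall>u. \<Phi> (- u) = \<Phi> u) \<and> \<Phi> 0 = 0
     \<and> (\<forall>u. u \<noteq> 0 \<longrightarrow> \<Phi> u > 0)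
     \<and> ((\<lambda>u. \<Phi> u / u) \<longlongrightarrow> 0) (at_right 0)
     \<and> filterlim (\<lambda>u. \<Phi> u / u) at_top at_top"

definition compl_N :: "(real \<Rightarrow> real) \<Rightarrow> real \<Rightarrow> real" where
  "compl_N \<Phi> v = (SUP u\<in>{0..}. u * \<bar>v\<bar> - \<Phi> u)"

definition orlicz_space :: "(real \<Rightarrow> real) \<Rightarrow> ((real \<times> real) \<Rightarrow> real) set" where
  "orlicz_space \<Phi> = {f. f \<in> borel_measurable (lebesgue_on triangle) \<and>
     (\<forall>g \<in> borel_measurable (lebesgue_on triangle).
        (\<integral>\<^sup>+ x. ennreal (compl_N \<Phi> (g x)) \<partial>lebesgue_on triangle) < \<infinity> \<longrightarrow>
        integrable (lebesgue_on triangle) (\<lambda>x. f x * g x))}"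

definition orlicz_norm :: "(real \<Rightarrow> real) \<Rightarrow> ((real \<times> real) \<Rightarrow> real) \<Rightarrow> ereal" where
  "orlicz_norm \<Phi> f = (SUP g \<in> {g \<in> borel_measurable (lebesgue_on triangle).
        (\<integral>\<^sup>+ x. ennreal (compl_N \<Phi> (g x)) \<partial>lebesgue_on triangle) \<le> 1}.
      ereal \<bar>\<integral> x. f x * g x \<partial>lebesgue_on triangle\<bar>)"

definition sq_cell :: "nat \<Rightarrow> nat \<Rightarrow> nat \<Rightarrow> (real \<times> real) set" where
  "sq_cell n k l = {real k / real (n+2) .. real (k+1) / real (n+2)} \<times>
                   {real l / real (n+2) .. real (l+1) / real (n+2)}"

definition p_tri :: "nat \<Rightarrow> int \<Rightarrow> int \<Rightarrow> real \<times> real \<Rightarrow> real" where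
  "p_tri m k l x = (if 0 \<le> k \<and> 0 \<le> l \<and> k + l \<le> int m then
      fact m / (fact (nat k) * fact (nat l) * fact (m - nat k - nat l))
      * fst x ^ nat k * snd x ^ nat l * (1 - fst x - snd x) ^ (m - nat k - nat l)
    else 0)"

definition b_tri :: "nat \<Rightarrow> nat \<Rightarrow> nat \<Rightarrow> nat \<Rightarrow> real \<times> real \<Rightarrow> real" where
  "b_tri n k l s x = (1 - fst x - snd x) * p_tri (n - s) (int k) (int l) x
     + fst x * p_tri (n - s) (int k - int s) (int l) x
     + snd x * p_tri (n - s) (int k) (int l - int s) x"

definition stancu_kantorovich ::
    "nat \<Rightarrow> nat \<Rightarrow> ((real \<times> real) \<Rightarrow> real) \<Rightarrow> (real \<times> real) \<Rightarrow> real" where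
  "stancu_kantorovich n s f x = (\<Sum>k\<le>n. \<Sum>l\<le>n - k.
      b_tri n k l s x * (real (n+2))^2 * (LINT u : sq_cell n k l | lebesgue. f u))"

end

theory Submission
  imports Defs
begin

lemma Nf_nonneg: assumes "N_function \<Phi>" shows "\<Phi> u \<ge> 0"
  using assms unfolding N_function_def by (cases "u = 0") (auto intro: less_imp_le)

lemma Nf_bdd: assumes "N_function \<Phi>" shows "bdd_above ((\<lambda>u. u*\<bar>v\<bar> - \<Phi> u) ` {0..})"
proof -
  have "filterlim (\<lambda>u. \<Phi> u / u) at_top at_top" using assms unfolding N_function_def by auto
  hence "eventually (\<lambda>u. \<Phi> u / u \<ge> \<bar>v\<bar>) at_top" by (simp add: filterlim_at_top)
  then obtain U where U: "\<And>u. u \<ge> U \<Longrightarrow> \<Phi> u / u \<ge> \<bar>v\<bar>" by (auto simp: eventually_at_top_linorder)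
  show ?thesis unfolding bdd_above_def
  proof (intro exI ballI)
    fix y assume "y \<in> (\<lambda>u. u*\<bar>v\<bar> - \<Phi> u) ` {0..}"
    then obtain u where u: "u \<ge> 0" "y = u*\<bar>v\<bar> - \<Phi> u" by auto
    show "y \<le> max U 1 * \<bar>v\<bar>"
    proof (cases "u \<ge> max U 1")
      case True
      hence "\<Phi> u / u \<ge> \<bar>v\<bar>" "u > 0" using U by auto
      hence "\<Phi> u \<ge> u * \<bar>v\<bar>" by (simp add: field_simps)
      thus ?thesis using u by (auto intro: order.trans[of _ 0] simp: mult_nonneg_nonneg)
    next
      case False
      hence "u*\<bar>v\<bar> \<le> max U 1 * \<bar>v\<bar>" by (intro mult_right_mono) auto
      thus ?thesis using u Nf_nonneg[OF assms, of u] by linarith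
    qed
  qed
qed

lemma psi_ge: assumes "N_function \<Phi>" "u \<ge> 0" shows "u*\<bar>v\<bar> - \<Phi> u \<le> compl_N \<Phi> v"
  unfolding compl_N_def by (rule cSUP_upper[OF _ Nf_bdd[OF assms(1)]]) (use assms in auto)

lemma psi_le: assumes "\<And>u. u \<ge> 0 \<Longrightarrow> u*\<bar>v\<bar> - \<Phi> u \<le> B" shows "compl_N \<Phi> v \<le> B"
  unfolding compl_N_def by (rule cSUP_least) (use assms in auto)

lemma psi_nonneg: assumes "N_function \<Phi>" shows "compl_N \<Phi> v \<ge> 0"
  using psi_ge[OF assms, of 0 v] assms by (simp add: N_function_def)

lemma psi_zero: assumes "N_function \<Phi>" shows "compl_N \<Phi> 0 = 0"
  using psi_nonneg[OF assms, of 0] psi_le[of 0 \<Phi> 0] Nf_nonneg[OF assms] by force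

lemma psi_lin: assumes "N_function \<Phi>" shows "\<bar>v\<bar> - \<Phi> 1 \<le> compl_N \<Phi> v"
  using psi_ge[OF assms, of 1 v] by simp

lemma psi_abs: "compl_N \<Phi> \<bar>v\<bar> = compl_N \<Phi> v" unfolding compl_N_def by simp

lemma psi_meas: assumes "N_function \<Phi>" shows "compl_N \<Phi> \<in> borel_measurable borel"
proof -
  define G where "G t = compl_N \<Phi> (max t 0)" for t
  have "mono G" unfolding mono_def G_def
  proof (intro allI impI)
    fix a b :: real assume "a \<le> b"
    show "compl_N \<Phi> (max a 0) \<le> compl_N \<Phi> (max b 0)"
    proof (rule psi_le)
      fix u :: real assume u: "u \<ge> 0"
      have "u * \<bar>max a 0\<bar> \<le> u * \<bar>max b 0\<bar>" using u \<open>a \<le> b\<close> by (intro mult_left_mono) auto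
      thus "u * \<bar>max a 0\<bar> - \<Phi> u \<le> compl_N \<Phi> (max b 0)" using psi_ge[OF assms u, of "max b 0"] by linarith
    qed
  qed
  hence "G \<in> borel_measurable borel" by (rule borel_measurable_mono)
  moreover have "compl_N \<Phi> = (\<lambda>v. G \<bar>v\<bar>)" unfolding G_def by (auto simp: psi_abs fun_eq_iff)
  ultimately show ?thesis by simp
qed

abbreviation "LTr \<equiv> lebesgue_on triangle"

lemma T_closed: "closed triangle"
proof -
  have eq: "triangle = {x. fst x + snd x \<le> 1} \<inter> {x. fst x \<ge> 0} \<inter> {x. snd x \<ge> 0}"
    unfolding triangle_def by auto
  show ?thesis unfolding eq by (intro closed_Int closed_Collect_le continuous_intros)
qed

lemma T_sub: "triangle \<subseteq> cbox ((0::real),(0::real)) (1,1)"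
  by (auto simp: triangle_def cbox_Pair_eq)

lemma T_compact: "compact triangle"
  using T_closed T_sub by (metis bounded_cbox bounded_subset compact_eq_bounded_closed)

lemma T_borel[measurable]: "triangle \<in> sets borel"
  using T_closed by (simp add: borel_closed)

lemma T_leb[measurable]: "triangle \<in> sets lebesgue"
  using T_borel by simp

lemma T_fin: "emeasure lebesgue triangle < \<infinity>"
proof -
  have "emeasure lebesgue triangle \<le> emeasure lebesgue (cbox ((0::real),(0::real)) (1,1))"
    by (intro emeasure_mono T_sub) auto
  also have "\<dots> < \<infinity>" using emeasure_bounded_finite[OF bounded_cbox] by simp
  finally show ?thesis .
qed

lemma space_LT[simp]: "space LTr = triangle" by simp

lemma LT_fin: "emeasure LTr triangle < \<infinity>"
  using T_fin by (simp add: emeasure_restrict_space)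

lemma finite_LT: "finite_measure LTr"
  using LT_fin by (intro finite_measureI) (simp add: emeasure_restrict_space)

lemma orl_integrable: assumes "N_function \<Phi>" "f \<in> orlicz_space \<Phi>" shows "integrable LTr f"
proof -
  have "(\<integral>\<^sup>+ x. ennreal (compl_N \<Phi> ((\<lambda>_. 1::real) x)) \<partial>LTr) = ennreal (compl_N \<Phi> 1) * emeasure LTr triangle"
    by (simp add: nn_integral_const)
  also have "\<dots> < \<infinity>" using LT_fin by (simp add: ennreal_mult_less_top)
  finally have fin: "(\<integral>\<^sup>+ x. ennreal (compl_N \<Phi> ((\<lambda>_. 1::real) x)) \<partial>LTr) < \<infinity>" .
  have m: "(\<lambda>_. 1::real) \<in> borel_measurable LTr" by simp
  have all: "\<forall>g\<in>borel_measurable LTr. (\<integral>\<^sup>+ x. ennreal (compl_N \<Phi> (g x)) \<partial>LTr) < \<infinity> \<longrightarrow> integrable LTr (\<lambda>x. f x * g x)"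
    using assms(2) unfolding orlicz_space_def by blast
  have "integrable LTr (\<lambda>x. f x * 1)" using mp[OF bspec[OF all m] fin] by simp
  thus ?thesis by simp
qed

lemma g_integrable: assumes "N_function \<Phi>" "g \<in> borel_measurable LTr"
  "(\<integral>\<^sup>+ x. ennreal (compl_N \<Phi> (g x)) \<partial>LTr) < \<infinity>" shows "integrable LTr g"
proof (rule integrableI_bounded[OF assms(2)])
  have "(\<integral>\<^sup>+ x. ennreal (norm (g x)) \<partial>LTr) \<le> (\<integral>\<^sup>+ x. ennreal (compl_N \<Phi> (g x)) + ennreal (\<Phi> 1) \<partial>LTr)"
  proof (intro nn_integral_mono)
    fix x
    have "\<bar>g x\<bar> \<le> compl_N \<Phi> (g x) + \<Phi> 1" using psi_lin[OF assms(1), of "g x"] by linarith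
    hence "ennreal \<bar>g x\<bar> \<le> ennreal (compl_N \<Phi> (g x) + \<Phi> 1)" by (rule ennreal_leI)
    also have "\<dots> = ennreal (compl_N \<Phi> (g x)) + ennreal (\<Phi> 1)"
      using psi_nonneg[OF assms(1)] Nf_nonneg[OF assms(1), of 1] by (simp add: ennreal_plus)
    finally show "ennreal (norm (g x)) \<le> ennreal (compl_N \<Phi> (g x)) + ennreal (\<Phi> 1)" by simp
  qed
  also have "\<dots> = (\<integral>\<^sup>+ x. ennreal (compl_N \<Phi> (g x)) \<partial>LTr) + ennreal (\<Phi> 1) * emeasure LTr triangle"
    using psi_meas[OF assms(1)] assms(2)
    by (subst nn_integral_add) (auto simp: nn_integral_const)
  also have "\<dots> < \<infinity>" using assms(3) LT_fin by (simp add: ennreal_mult_less_top)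
  finally show "(\<integral>\<^sup>+ x. ennreal (norm (g x)) \<partial>LTr) < \<infinity>" .
qed

lemma p_nonneg: assumes "x \<in> triangle" shows "p_tri m i j x \<ge> 0"
  using assms unfolding p_tri_def triangle_def by (auto intro!: mult_nonneg_nonneg divide_nonneg_nonneg)

lemma b_nonneg: assumes "x \<in> triangle" shows "b_tri n k l s x \<ge> 0"
  using assms p_nonneg[OF assms] unfolding b_tri_def triangle_def
  by (auto intro!: add_nonneg_nonneg mult_nonneg_nonneg)

lemma p_cont: "continuous_on UNIV (p_tri m i j)"
  unfolding p_tri_def by (cases "0 \<le> i \<and> 0 \<le> j \<and> i + j \<le> int m") (auto intro!: continuous_intros)

lemma b_cont: "continuous_on UNIV (b_tri n k l s)"
  unfolding b_tri_def by (intro continuous_intros p_cont[THEN continuous_on_subset]) auto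

lemma p_borel[measurable]: "p_tri m i j \<in> borel_measurable borel"
  using p_cont by (rule borel_measurable_continuous_onI)

lemma b_borel[measurable]: "b_tri n k l s \<in> borel_measurable borel"
  using b_cont by (rule borel_measurable_continuous_onI)

lemma trinom: "(\<Sum>i\<le>m. \<Sum>j\<le>m-i. fact m / (fact i * fact j * fact (m - i - j)) * a^i * b^j * c^(m-i-j))
    = (a + b + c :: real)^m"
proof -
  have "(a + (b + c))^m = (\<Sum>i\<le>m. of_nat (m choose i) * a^i * (b+c)^(m-i))"
    by (simp add: binomial_ring mult.assoc)
  also have "\<dots> = (\<Sum>i\<le>m. \<Sum>j\<le>m-i. fact m / (fact i * fact j * fact (m - i - j)) * a^i * b^j * c^(m-i-j))"
  proof (rule sum.cong[OF refl])
    fix i assume i: "i \<in> {..m}"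
    have "(b+c)^(m-i) = (\<Sum>j\<le>m-i. of_nat (m-i choose j) * b^j * c^(m-i-j))"
      by (simp add: binomial_ring mult.assoc)
    hence "of_nat (m choose i) * a^i * (b+c)^(m-i) = (\<Sum>j\<le>m-i. of_nat (m choose i) * of_nat (m-i choose j) * a^i * b^j * c^(m-i-j))"
      by (simp add: sum_distrib_left mult_ac)
    also have "\<dots> = (\<Sum>j\<le>m-i. fact m / (fact i * fact j * fact (m - i - j)) * a^i * b^j * c^(m-i-j))"
    proof (rule sum.cong[OF refl])
      fix j assume j: "j \<in> {..m-i}"
      have "real (m choose i) * real (m-i choose j) = fact m / (fact i * fact (m-i)) * (fact (m-i) / (fact j * fact (m-i-j)))"
        using i j by (simp add: binomial_fact)
      also have "\<dots> = fact m / (fact i * fact j * fact (m - i - j))"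
        by (simp add: field_simps)
      finally show "real (m choose i) * real (m-i choose j) * a^i * b^j * c^(m-i-j) = fact m / (fact i * fact j * fact (m - i - j)) * a^i * b^j * c^(m-i-j)"
        by simp
    qed
    finally show "of_nat (m choose i) * a^i * (b+c)^(m-i) = (\<Sum>j\<le>m-i. fact m / (fact i * fact j * fact (m - i - j)) * a^i * b^j * c^(m-i-j))" .
  qed
  finally show ?thesis by (simp add: add.assoc)
qed

definition Sm :: "nat \<Rightarrow> (int \<times> int) set" where
  "Sm m = (\<lambda>(i,j). (int i, int j)) ` (SIGMA i:{..m}. {..m-i})"

lemma Sm_sum: "(\<Sum>q\<in>Sm m. p_tri m (fst q) (snd q) x) = 1"
proof -
  have inj: "inj_on (\<lambda>(i,j). (int i, int j)) (SIGMA i:{..m}. {..m-i})" by (auto simp: inj_on_def)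
  have "(\<Sum>q\<in>Sm m. p_tri m (fst q) (snd q) x) = (\<Sum>(i,j)\<in>(SIGMA i:{..m}. {..m-i}). p_tri m (int i) (int j) x)"
    unfolding Sm_def by (subst sum.reindex[OF inj]) (simp add: case_prod_unfold)
  also have "\<dots> = (\<Sum>i\<le>m. \<Sum>j\<le>m-i. p_tri m (int i) (int j) x)"
    by (subst sum.Sigma) auto
  also have "\<dots> = (\<Sum>i\<le>m. \<Sum>j\<le>m-i. fact m / (fact i * fact j * fact (m - i - j)) * fst x^i * snd x^j * (1 - fst x - snd x)^(m-i-j))"
    by (intro sum.cong refl) (auto simp: p_tri_def)
  also have "\<dots> = 1" by (subst trinom) simp
  finally show ?thesis .
qed

lemma p_zero_out: "q \<notin> Sm m \<Longrightarrow> p_tri m (fst q) (snd q) x = 0"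
proof -
  assume q: "q \<notin> Sm m"
  { assume c: "0 \<le> fst q \<and> 0 \<le> snd q \<and> fst q + snd q \<le> int m"
    hence "q = (\<lambda>(i,j). (int i, int j)) (nat (fst q), nat (snd q))" by (cases q) auto
    moreover have "(nat (fst q), nat (snd q)) \<in> (SIGMA i:{..m}. {..m-i})" using c by auto
    ultimately have "q \<in> Sm m" unfolding Sm_def by blast }
  with q show ?thesis unfolding p_tri_def by auto
qed

lemma p_sum_le: assumes "x \<in> triangle" "finite P" shows "(\<Sum>q\<in>P. p_tri m (fst q) (snd q) x) \<le> 1"
proof -
  have fS: "finite (Sm m)" unfolding Sm_def by auto
  have "(\<Sum>q\<in>P. p_tri m (fst q) (snd q) x) = (\<Sum>q\<in>P \<inter> Sm m. p_tri m (fst q) (snd q) x)"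
    using assms(2) p_zero_out by (intro sum.mono_neutral_right) auto
  also have "\<dots> \<le> (\<Sum>q\<in>Sm m. p_tri m (fst q) (snd q) x)"
    using fS p_nonneg[OF assms(1)] by (intro sum_mono2) auto
  finally show ?thesis using Sm_sum by simp
qed

definition Kidx :: "nat \<Rightarrow> (nat \<times> nat) set" where
  "Kidx n = (SIGMA k:{..n}. {..n-k})"

lemma Kidx_fin[simp]: "finite (Kidx n)" unfolding Kidx_def by auto

lemma p_sum_shift: assumes "x \<in> triangle" "inj_on \<phi> (Kidx n)"
  shows "(\<Sum>q\<in>Kidx n. p_tri m (fst (\<phi> q)) (snd (\<phi> q)) x) \<le> 1"
proof -
  have "(\<Sum>q\<in>Kidx n. p_tri m (fst (\<phi> q)) (snd (\<phi> q)) x) = (\<Sum>q\<in>\<phi> ` Kidx n. p_tri m (fst q) (snd q) x)"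
    by (subst sum.reindex[OF assms(2)]) simp
  also have "\<dots> \<le> 1" by (rule p_sum_le[OF assms(1)]) simp
  finally show ?thesis .
qed

lemma b_sum_le: assumes "x \<in> triangle" shows "(\<Sum>q\<in>Kidx n. b_tri n (fst q) (snd q) s x) \<le> 1"
proof -
  define m where "m = n - s"
  have x: "fst x \<ge> 0" "snd x \<ge> 0" "1 - fst x - snd x \<ge> 0" using assms by (auto simp: triangle_def)
  have i0: "inj_on (\<lambda>q. (int (fst q), int (snd q))) (Kidx n)" by (auto simp: inj_on_def)
  have i1: "inj_on (\<lambda>q. (int (fst q) - int s, int (snd q))) (Kidx n)" by (auto simp: inj_on_def)
  have i2: "inj_on (\<lambda>q. (int (fst q), int (snd q) - int s)) (Kidx n)" by (auto simp: inj_on_def)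
  note A0 = p_sum_shift[OF assms i0, of m, simplified]
  note A1 = p_sum_shift[OF assms i1, of m, simplified]
  note A2 = p_sum_shift[OF assms i2, of m, simplified]
  have "(\<Sum>q\<in>Kidx n. b_tri n (fst q) (snd q) s x) =
     (1 - fst x - snd x) * (\<Sum>q\<in>Kidx n. p_tri m (int (fst q)) (int (snd q)) x)
     + fst x * (\<Sum>q\<in>Kidx n. p_tri m (int (fst q) - int s) (int (snd q)) x)
     + snd x * (\<Sum>q\<in>Kidx n. p_tri m (int (fst q)) (int (snd q) - int s) x)"
    unfolding b_tri_def m_def by (simp add: sum.distrib sum_distrib_left)
  also have "\<dots> \<le> (1 - fst x - snd x) * 1 + fst x * 1 + snd x * 1"
    using A0 A1 A2 x by (intro add_mono mult_left_mono) auto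
  finally show ?thesis by simp
qed

lemma beta_nat: "Beta (real a + 1) (real b + 1) = fact a * fact b / fact (a + b + 1)"
proof -
  have "Beta (real a + 1) (real b + 1) = Gamma (1 + real a) * Gamma (1 + real b) / Gamma (1 + real (a+b+1))"
    unfolding Beta_def by (simp add: add_ac)
  thus ?thesis by (simp only: Gamma_fact)
qed

lemma beta01: "((\<lambda>t. t^a * (1-t)^b) has_integral (fact a * fact b / fact (a + b + 1) :: real)) {0..1}"
proof -
  have "((\<lambda>t. t powr (real a + 1 - 1) * (1 - t) powr (real b + 1 - 1)) has_integral Beta (real a + 1) (real b + 1)) {0..1}"
    by (rule has_integral_Beta_real) auto
  hence h: "((\<lambda>t. t powr (real a) * (1 - t) powr (real b)) has_integral (fact a * fact b / fact (a + b + 1))) {0..1}"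
    by (simp add: beta_nat)
  show ?thesis
    by (rule has_integral_spike_finite[OF _ _ h, of "{0,1}"]) (auto simp: powr_realpow)
qed

lemma beta01_nn: "(\<integral>\<^sup>+ t. ennreal (indicator {0..1} t * (t^a * (1-t)^b)) \<partial>lborel) = ennreal (fact a * fact b / fact (a + b + 1))"
proof -
  show ?thesis
    by (rule nn_integral_has_integral_lebesgue[OF _ beta01]) auto
qed

lemma betaL_nn: assumes L: "L \<ge> 0"
  shows "(\<integral>\<^sup>+ y. ennreal (indicator {0..L} y * (y^a * (L-y)^b)) \<partial>lborel) = ennreal (L^(a+b+1) * (fact a * fact b / fact (a + b + 1)))"
proof (cases "L = 0")
  case True
  have "(\<integral>\<^sup>+ y. ennreal (indicator {0..L} y * (y^a * (L-y)^b)) \<partial>lborel) = (\<integral>\<^sup>+ y. ennreal ((0::real)^a * 0^b) * indicator {0::real} y \<partial>lborel)"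
    using True by (intro nn_integral_cong) (auto split: split_indicator)
  also have "\<dots> = 0" by (subst nn_integral_cmult_indicator) auto
  finally show ?thesis using True by simp
next
  case False
  hence Lp: "L > 0" using L by simp
  have "(\<integral>\<^sup>+ y. ennreal (indicator {0..L} y * (y^a * (L-y)^b)) \<partial>lborel)
     = ennreal \<bar>L\<bar> * (\<integral>\<^sup>+ t. ennreal (indicator {0..L} (0 + L*t) * ((0 + L*t)^a * (L-(0 + L*t))^b)) \<partial>lborel)"
    by (rule nn_integral_real_affine) (use Lp in auto)
  also have "(\<lambda>t. ennreal (indicator {0..L} (0 + L*t) * ((0 + L*t)^a * (L-(0 + L*t))^b)))
      = (\<lambda>t. ennreal (L^(a+b)) * ennreal (indicator {0..1} t * (t^a * (1-t)^b)))"
  proof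
    fix t :: real
    have iff: "(L*t \<in> {0..L}) = (t \<in> {0..1})" using Lp
      by (auto simp: zero_le_mult_iff mult_le_cancel_left1)
    have "L - L*t = L*(1-t)" by (simp add: algebra_simps)
    hence "indicator {0..L} (0 + L*t) * ((0 + L*t)^a * (L-(0 + L*t))^b) = L^(a+b) * (indicator {0..1} t * (t^a * (1-t)^b))"
      using iff by (simp add: indicator_def power_mult_distrib power_add)
    thus "ennreal (indicator {0..L} (0 + L*t) * ((0 + L*t)^a * (L-(0 + L*t))^b)) = ennreal (L^(a+b)) * ennreal (indicator {0..1} t * (t^a * (1-t)^b))"
      using Lp by (simp add: ennreal_mult')
  qed
  also have "ennreal \<bar>L\<bar> * (\<integral>\<^sup>+ t. ennreal (L^(a+b)) * ennreal (indicator {0..1} t * (t^a * (1-t)^b)) \<partial>lborel)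
      = ennreal L * (ennreal (L^(a+b)) * ennreal (fact a * fact b / fact (a + b + 1)))"
    using Lp by (simp add: nn_integral_cmult beta01_nn)
  also have "\<dots> = ennreal (L^(a+b+1) * (fact a * fact b / fact (a + b + 1)))"
    using Lp by (simp add: ennreal_mult[symmetric] mult_ac)
  finally show ?thesis .
qed

lemma tri_int:
  "(\<integral>\<^sup>+ z. ennreal (indicator triangle z * (fst z^i * snd z^j * (1 - fst z - snd z)^r)) \<partial>lborel)
     = ennreal (fact i * fact j * fact r / fact (i+j+r+2))"
proof -
  define K :: real where "K = fact j * fact r / fact (j + r + 1)"
  define F where "F z = ennreal (indicator triangle z * (fst z^i * snd z^j * (1 - fst z - snd z)^r))" for z :: "real \<times> real"
  have Fm: "F \<in> borel_measurable (lborel \<Otimes>\<^sub>M lborel)"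
  proof -
    have [measurable]: "(\<lambda>z::real\<times>real. fst z^i * snd z^j * (1 - fst z - snd z)^r) \<in> borel_measurable borel"
      by (intro borel_measurable_continuous_onI continuous_intros)
    have "F \<in> borel_measurable borel" unfolding F_def by measurable
    thus ?thesis unfolding lborel_prod by simp
  qed
  have "(\<integral>\<^sup>+ z. F z \<partial>lborel) = (\<integral>\<^sup>+ z. F z \<partial>(lborel \<Otimes>\<^sub>M lborel))" by (simp add: lborel_prod)
  also have "\<dots> = (\<integral>\<^sup>+ x. \<integral>\<^sup>+ y. F (x,y) \<partial>lborel \<partial>lborel)"
    by (rule lborel.nn_integral_fst[symmetric, OF Fm])
  also have "\<dots> = (\<integral>\<^sup>+ x. ennreal (K * (indicator {0..1} x * (x^i * (1-x)^(j+r+1)))) \<partial>lborel)"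
  proof (rule nn_integral_cong)
    fix x :: real
    show "(\<integral>\<^sup>+ y. F (x,y) \<partial>lborel) = ennreal (K * (indicator {0..1} x * (x^i * (1-x)^(j+r+1))))"
    proof (cases "x \<in> {0..1}")
      case False
      have "\<And>y. (x,y) \<notin> triangle" using False by (auto simp: triangle_def)
      thus ?thesis using False unfolding F_def by simp
    next
      case True
      have "\<And>y. F (x,y) = ennreal (x^i) * ennreal (indicator {0..1-x} y * (y^j * ((1-x)-y)^r))"
      proof -
        fix y
        have "indicator triangle (x,y) = (indicator {0..1-x} y :: real)"
          using True by (auto simp: triangle_def indicator_def)
        thus "F (x,y) = ennreal (x^i) * ennreal (indicator {0..1-x} y * (y^j * ((1-x)-y)^r))"
          unfolding F_def using True by (simp add: ennreal_mult'[symmetric] mult_ac diff_diff_eq)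
      qed
      hence "(\<integral>\<^sup>+ y. F (x,y) \<partial>lborel) = ennreal (x^i) * (\<integral>\<^sup>+ y. ennreal (indicator {0..1-x} y * (y^j * ((1-x)-y)^r)) \<partial>lborel)"
        by (simp add: nn_integral_cmult)
      also have "\<dots> = ennreal (x^i) * ennreal ((1-x)^(j+r+1) * K)"
        using True by (subst betaL_nn) (auto simp: K_def)
      also have "\<dots> = ennreal (K * (indicator {0..1} x * (x^i * (1-x)^(j+r+1))))"
        using True by (simp add: ennreal_mult'[symmetric] mult_ac)
      finally show ?thesis .
    qed
  qed
  also have "\<dots> = ennreal K * (\<integral>\<^sup>+ x. ennreal (indicator {0..1} x * (x^i * (1-x)^(j+r+1))) \<partial>lborel)"
  proof -
    have K0: "K \<ge> 0" by (simp add: K_def)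
    show ?thesis by (simp only: ennreal_mult'[OF K0]) (rule nn_integral_cmult, measurable)
  qed
  also have "\<dots> = ennreal K * ennreal (fact i * fact (j+r+1) / fact (i + (j+r+1) + 1))"
    by (simp only: beta01_nn)
  also have "\<dots> = ennreal (fact i * fact j * fact r / fact (i+j+r+2))"
    by (simp add: K_def ennreal_mult'[symmetric] add_ac)
  finally show ?thesis unfolding F_def .
qed

lemma LT_nn: assumes "f \<in> borel_measurable borel"
  shows "(\<integral>\<^sup>+ x. f x \<partial>LTr) = (\<integral>\<^sup>+ x. f x * indicator triangle x \<partial>lborel)"
  by (simp add: nn_integral_restrict_space nn_integral_completion)

lemma borel_LT: "f \<in> borel_measurable borel \<Longrightarrow> f \<in> borel_measurable LTr"
  by (intro measurable_restrict_space1 measurable_completion) (simp add: measurable_lborel1)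

lemma p_LT[measurable]: "p_tri m i j \<in> borel_measurable LTr"
  by (rule borel_LT) simp

lemma b_LT[measurable]: "b_tri n k l s \<in> borel_measurable LTr"
  by (rule borel_LT) simp

lemma p_int: "(\<integral>\<^sup>+ x. ennreal (p_tri m i j x) \<partial>LTr) \<le> ennreal (1 / ((real m + 1) * (real m + 2)))"
proof (cases "0 \<le> i \<and> 0 \<le> j \<and> i + j \<le> int m")
  case False
  hence "\<And>x. p_tri m i j x = 0" by (simp only: p_tri_def if_not_P[OF False] if_False)
  thus ?thesis by simp
next
  case True
  define a where "a = nat i"
  define b where "b = nat j"
  define r where "r = m - a - b"
  have m: "m = a + b + r" using True by (simp add: a_def b_def r_def) linarith
  define C :: real where "C = fact m / (fact a * fact b * fact r)"
  have C0: "C \<ge> 0" by (simp add: C_def)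
  have p: "p_tri m i j x = C * (fst x^a * snd x^b * (1 - fst x - snd x)^r)" for x
    using True unfolding p_tri_def C_def a_def b_def r_def by simp
  have "(\<integral>\<^sup>+ x. ennreal (p_tri m i j x) \<partial>LTr) = (\<integral>\<^sup>+ x. ennreal (p_tri m i j x) * indicator triangle x \<partial>lborel)"
    by (rule LT_nn) measurable
  also have "\<dots> = (\<integral>\<^sup>+ x. ennreal C * ennreal (indicator triangle x * (fst x^a * snd x^b * (1 - fst x - snd x)^r)) \<partial>lborel)"
    by (intro nn_integral_cong) (auto simp: p ennreal_mult'[OF C0] split: split_indicator)
  also have "\<dots> = ennreal C * ennreal (fact a * fact b * fact r / fact (a+b+r+2))"
  proof -
    have [measurable]: "(\<lambda>z::real\<times>real. fst z^a * snd z^b * (1 - fst z - snd z)^r) \<in> borel_measurable borel"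
      by (intro borel_measurable_continuous_onI continuous_intros)
    show ?thesis by (subst nn_integral_cmult) (measurable, simp only: tri_int)
  qed
  also have "\<dots> = ennreal (fact m / fact (m+2))"
    using C0 by (simp add: ennreal_mult'[symmetric] C_def m)
  also have "fact m / fact (m+2) = (1 / ((real m + 1) * (real m + 2)) :: real)"
  proof -
    have f: "(fact (m+2)::real) = (real m + 2) * ((real m + 1) * fact m)"
      by (simp add: numeral_2_eq_2 algebra_simps)
    have "(fact m :: real) > 0" by simp
    moreover have "(real m + 1) * (real m + 2) > 0" by simp
    ultimately show ?thesis unfolding f by (simp add: divide_simps)
  qed
  finally show ?thesis by simp
qed

lemma b_int: "(\<integral>\<^sup>+ x. ennreal (b_tri n k l s x) \<partial>LTr) \<le> ennreal (3 / ((real (n-s) + 1) * (real (n-s) + 2)))"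
proof -
  define m where "m = n - s"
  define E where "E = ennreal (1 / ((real m + 1) * (real m + 2)))"
  have "(\<integral>\<^sup>+ x. ennreal (b_tri n k l s x) \<partial>LTr) \<le>
    (\<integral>\<^sup>+ x. ennreal (p_tri m k l x) + ennreal (p_tri m (int k - int s) l x) + ennreal (p_tri m k (int l - int s) x) \<partial>LTr)"
  proof (intro nn_integral_mono)
    fix x assume "x \<in> space LTr"
    hence x: "x \<in> triangle" by simp
    hence c: "fst x \<ge> 0" "snd x \<ge> 0" "1 - fst x - snd x \<ge> 0" "fst x \<le> 1" "snd x \<le> 1" "1 - fst x - snd x \<le> 1"
      by (auto simp: triangle_def)
    note pn = p_nonneg[OF x]
    have "b_tri n k l s x \<le> p_tri m k l x + p_tri m (int k - int s) l x + p_tri m k (int l - int s) x"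
      unfolding b_tri_def m_def[symmetric]
      using c pn mult_left_le_one_le by (intro add_mono) (auto intro: mult_left_le_one_le)
    hence "ennreal (b_tri n k l s x) \<le> ennreal (p_tri m k l x + p_tri m (int k - int s) l x + p_tri m k (int l - int s) x)"
      by (rule ennreal_leI)
    thus "ennreal (b_tri n k l s x) \<le> ennreal (p_tri m k l x) + ennreal (p_tri m (int k - int s) l x) + ennreal (p_tri m k (int l - int s) x)"
      using pn by (simp add: ennreal_plus)
  qed
  also have "\<dots> = (\<integral>\<^sup>+ x. ennreal (p_tri m k l x) \<partial>LTr) + (\<integral>\<^sup>+ x. ennreal (p_tri m (int k - int s) l x) \<partial>LTr) + (\<integral>\<^sup>+ x. ennreal (p_tri m k (int l - int s) x) \<partial>LTr)"
    by (simp add: nn_integral_add p_nonneg)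
  also have "\<dots> \<le> E + E + E" unfolding E_def by (intro add_mono p_int)
  also have "\<dots> = ennreal (3 / ((real m + 1) * (real m + 2)))"
    unfolding E_def by (simp add: ennreal_plus[symmetric] del: ennreal_plus)
  finally show ?thesis unfolding m_def .
qed

lemma mass_bound: assumes "2 * s < n"
  shows "(real n + 2)^2 * (3 / ((real (n-s) + 1) * (real (n-s) + 2))) \<le> 12"
proof -
  have "2 * real (n - s) \<ge> real n + 1" using assms by linarith
  hence "(real n + 2) * (real n + 2) \<le> (2 * real (n-s) + 2) * (2 * real (n-s) + 4)"
    by (intro mult_mono) auto
  hence h: "4 * ((real (n-s) + 1) * (real (n-s) + 2)) \<ge> (real n + 2)^2"
    by (simp add: power2_eq_square algebra_simps)
  have pos: "(real (n-s) + 1) * (real (n-s) + 2) > 0" by simp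
  show ?thesis using h pos by (simp add: field_simps)
qed

lemma box_Pair_eq: "box (a, c) (b, d) = box a b \<times> box (c::real) (d::real)"
  by (auto simp: box_def Basis_prod_def)

definition Dbox :: "nat \<Rightarrow> nat \<Rightarrow> nat \<Rightarrow> (real \<times> real) set" where
  "Dbox n k l = box (real k / real (n+2), real l / real (n+2)) (real (k+1) / real (n+2), real (l+1) / real (n+2))"

lemma cell_eq: "sq_cell n k l = cbox (real k / real (n+2), real l / real (n+2)) (real (k+1) / real (n+2), real (l+1) / real (n+2))"
  unfolding sq_cell_def by (simp add: cbox_Pair_eq)

lemma cell_leb[measurable]: "sq_cell n k l \<in> sets lebesgue"
  unfolding cell_eq by simp

lemma Dbox_leb[measurable]: "Dbox n k l \<in> sets borel"
  unfolding Dbox_def by simp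

lemma box_sub_cell: "Dbox n k l \<subseteq> sq_cell n k l"
  unfolding cell_eq Dbox_def by (rule box_subset_cbox)

lemma cell_sub: assumes "q \<in> Kidx n" shows "sq_cell n (fst q) (snd q) \<subseteq> triangle"
proof
  fix u assume u: "u \<in> sq_cell n (fst q) (snd q)"
  have N: "real (n+2) > 0" by simp
  have q: "fst q + snd q \<le> n" using assms by (auto simp: Kidx_def)
  have u1: "fst u \<ge> real (fst q) / real (n+2)" "fst u \<le> real (fst q + 1) / real (n+2)"
   and u2: "snd u \<ge> real (snd q) / real (n+2)" "snd u \<le> real (snd q + 1) / real (n+2)"
    using u unfolding sq_cell_def by (auto simp: mem_Times_iff)
  have "fst u + snd u \<le> (real (fst q + 1) + real (snd q + 1)) / real (n+2)"
    using u1(2) u2(2) by (simp add: add_divide_distrib)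
  also have "\<dots> \<le> real (n+2) / real (n+2)" using q N by (intro divide_right_mono) auto
  finally show "u \<in> triangle" using u1(1) u2(1) N unfolding triangle_def
    by (auto intro: order.trans[rotated])
qed

lemma Dbox_measure: "emeasure lborel (Dbox n k l) = ennreal (1 / real (n+2)^2)"
proof -
  have N: "real (n+2) > 0" by simp
  have "Dbox n k l = box (real k / real (n+2)) (real (k+1) / real (n+2)) \<times> box (real l / real (n+2)) (real (l+1) / real (n+2))"
    unfolding Dbox_def by (simp add: box_Pair_eq)
  hence "emeasure lborel (Dbox n k l) = emeasure (lborel \<Otimes>\<^sub>M lborel) (box (real k / real (n+2)) (real (k+1) / real (n+2)) \<times> box (real l / real (n+2)) (real (l+1) / real (n+2)))"
    by (simp add: lborel_prod)
  also have "\<dots> = emeasure lborel (box (real k / real (n+2)) (real (k+1) / real (n+2))) * emeasure lborel (box (real l / real (n+2)) (real (l+1) / real (n+2)))"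
    by (rule lborel.emeasure_pair_measure_Times) auto
  also have "\<dots> = ennreal (1 / real (n+2)) * ennreal (1 / real (n+2))"
  proof -
    have e: "emeasure lborel (box (real j / real (n+2)) (real (j+1) / real (n+2))) = ennreal (1 / real (n+2))" for j
    proof -
      have le: "real j / real (n+2) \<le> real (j+1) / real (n+2)" by (intro divide_right_mono) auto
      have "real (j+1) / real (n+2) - real j / real (n+2) = 1 / real (n+2)" by (simp add: diff_divide_distrib[symmetric])
      thus ?thesis using emeasure_lborel_Ioo[OF le] by simp
    qed
    show ?thesis by (simp only: e)
  qed
  also have "\<dots> = ennreal (1 / real (n+2)^2)"
    by (simp add: ennreal_mult'[symmetric] power2_eq_square)
  finally show ?thesis .
qed

lemma cell_null: "sq_cell n k l - Dbox n k l \<in> null_sets lebesgue"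
proof -
  have "emeasure lborel (sq_cell n k l) = emeasure lborel (Dbox n k l)"
    unfolding cell_eq Dbox_def by (simp add: emeasure_lborel_cbox_eq emeasure_lborel_box_eq)
  hence "emeasure lborel (sq_cell n k l - Dbox n k l) = 0"
    using box_sub_cell[of n k l] Dbox_measure[of n k l]
    by (subst emeasure_Diff) (auto simp: cell_eq)
  hence "sq_cell n k l - Dbox n k l \<in> null_sets lborel"
    by (auto simp: null_sets_def cell_eq Dbox_def)
  thus ?thesis by (rule null_sets_completionI)
qed

lemma Dbox_disj: assumes "(k,l) \<noteq> (k',l')" shows "Dbox n k l \<inter> Dbox n k' l' = {}"
proof (rule ccontr)
  assume "Dbox n k l \<inter> Dbox n k' l' \<noteq> {}"
  then obtain u where u: "u \<in> Dbox n k l" "u \<in> Dbox n k' l'" by auto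
  have N: "real (n+2) > 0" by simp
  have a: "real k < fst u * real (n+2)" "fst u * real (n+2) < real k + 1"
          "real l < snd u * real (n+2)" "snd u * real (n+2) < real l + 1"
    using u(1) N unfolding Dbox_def by (auto simp: box_Pair_eq mem_Times_iff field_simps)
  have b: "real k' < fst u * real (n+2)" "fst u * real (n+2) < real k' + 1"
          "real l' < snd u * real (n+2)" "snd u * real (n+2) < real l' + 1"
    using u(2) N unfolding Dbox_def by (auto simp: box_Pair_eq mem_Times_iff field_simps)
  have "k = k'" using a b by linarith
  moreover have "l = l'" using a b by linarith
  ultimately show False using assms by simp
qed

definition Icell :: "nat \<Rightarrow> nat \<times> nat \<Rightarrow> ((real \<times> real) \<Rightarrow> real) \<Rightarrow> real" where
  "Icell n q f = (LINT u : sq_cell n (fst q) (snd q) | lebesgue. f u)"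

lemma K_sum: "stancu_kantorovich n s f x = (\<Sum>q\<in>Kidx n. b_tri n (fst q) (snd q) s x * (real (n+2))^2 * Icell n q f)"
  unfolding stancu_kantorovich_def Kidx_def Icell_def
  by (subst sum.Sigma) (auto simp: case_prod_unfold)

lemma LT_setint: "integrable LTr (f :: _ \<Rightarrow> real) \<Longrightarrow> set_integrable lebesgue triangle f"
  using set_integrable_eq[of triangle lebesgue f] by simp

lemma cell_setint: assumes "integrable LTr (f :: _ \<Rightarrow> real)" "q \<in> Kidx n"
  shows "set_integrable lebesgue (sq_cell n (fst q) (snd q)) f"
  by (rule set_integrable_subset[where A=triangle]) (simp_all add: LT_setint assms cell_sub[OF assms(2)])

lemma fD: assumes f: "integrable LTr (f :: _ \<Rightarrow> real)" and q: "q \<in> Kidx n"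
  shows "(\<integral>x. f x * indicator (Dbox n (fst q) (snd q)) x \<partial>LTr) = Icell n q f"
proof -
  let ?D = "Dbox n (fst q) (snd q)" and ?C = "sq_cell n (fst q) (snd q)"
  have DT: "?D \<subseteq> triangle" using box_sub_cell cell_sub[OF q] by blast
  have "(\<integral>x. f x * indicator ?D x \<partial>LTr) = (\<integral>x. indicator triangle x *\<^sub>R (f x * indicator ?D x) \<partial>lebesgue)"
    by (subst integral_restrict_space) auto
  also have "\<dots> = (LINT x : ?D | lebesgue. f x)"
    unfolding set_lebesgue_integral_def using DT
    by (intro Bochner_Integration.integral_cong) (auto split: split_indicator)
  also have "\<dots> = (LINT x : ?C | lebesgue. f x)"
  proof (rule set_integral_cong_set)
    have ci: "set_integrable lebesgue ?C f" by (rule cell_setint[OF f q])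
    thus "set_borel_measurable lebesgue ?C f" unfolding set_integrable_def set_borel_measurable_def by (rule borel_measurable_integrable)
    have "set_integrable lebesgue ?D f"
      by (rule set_integrable_subset[OF ci _ box_sub_cell]) (simp add: sets_completionI_sets)
    thus "set_borel_measurable lebesgue ?D f" unfolding set_integrable_def set_borel_measurable_def by (rule borel_measurable_integrable)
    show "AE x in lebesgue. (x \<in> ?C) = (x \<in> ?D)"
      apply (rule AE_mp[OF AE_not_in[OF cell_null[of n "fst q" "snd q"]]])
      apply (rule AE_I2)
      using box_sub_cell[of n "fst q" "snd q"] by blast
  qed
  finally show ?thesis unfolding Icell_def .
qed

lemma b_le1: assumes "x \<in> triangle" "q \<in> Kidx n" shows "b_tri n (fst q) (snd q) s x \<le> 1"
proof -
  have "b_tri n (fst q) (snd q) s x \<le> (\<Sum>q\<in>Kidx n. b_tri n (fst q) (snd q) s x)"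
    using assms b_nonneg[OF assms(1)] by (intro member_le_sum) auto
  also have "\<dots> \<le> 1" by (rule b_sum_le[OF assms(1)])
  finally show ?thesis .
qed

lemma bg_int: assumes g: "integrable LTr g" and q: "q \<in> Kidx n"
  shows "integrable LTr (\<lambda>x. b_tri n (fst q) (snd q) s x * g x)"
proof (rule Bochner_Integration.integrable_bound[OF g])
  show "(\<lambda>x. b_tri n (fst q) (snd q) s x * g x) \<in> borel_measurable LTr"
    using borel_measurable_integrable[OF g] by measurable
  show "AE x in LTr. norm (b_tri n (fst q) (snd q) s x * g x) \<le> norm (g x)"
  proof (rule AE_I2)
    fix x assume "x \<in> space LTr"
    hence x: "x \<in> triangle" by simp
    have "\<bar>b_tri n (fst q) (snd q) s x\<bar> \<le> 1" using b_le1[OF x q] b_nonneg[OF x] by simp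
    thus "norm (b_tri n (fst q) (snd q) s x * g x) \<le> norm (g x)"
      by (simp add: abs_mult mult_left_le_one_le)
  qed
qed

lemma jensen_lite:
  fixes w g :: "real \<times> real \<Rightarrow> real"
  assumes Phi: "N_function \<Phi>"
    and w: "integrable LTr w" and wg: "integrable LTr (\<lambda>x. w x * g x)"
    and wpg: "integrable LTr (\<lambda>x. w x * compl_N \<Phi> (g x))"
    and w0: "\<And>x. x \<in> triangle \<Longrightarrow> w x \<ge> 0" and W: "(\<integral>x. w x \<partial>LTr) \<le> 1"
  shows "compl_N \<Phi> (\<integral>x. w x * g x \<partial>LTr) \<le> (\<integral>x. w x * compl_N \<Phi> (g x) \<partial>LTr)"
proof (rule psi_le)
  fix u :: real assume u: "u \<ge> 0"
  have wag: "integrable LTr (\<lambda>x. w x * \<bar>g x\<bar>)"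
  proof -
    have "integrable LTr (\<lambda>x. \<bar>w x * g x\<bar>)" using wg by (rule integrable_abs)
    moreover have "integrable LTr (\<lambda>x. \<bar>w x * g x\<bar>) = integrable LTr (\<lambda>x. w x * \<bar>g x\<bar>)"
      by (rule Bochner_Integration.integrable_cong) (auto simp: w0 abs_mult)
    ultimately show ?thesis by simp
  qed
  have "\<bar>\<integral>x. w x * g x \<partial>LTr\<bar> \<le> (\<integral>x. \<bar>w x * g x\<bar> \<partial>LTr)" by (rule integral_abs_bound)
  also have "\<dots> = (\<integral>x. w x * \<bar>g x\<bar> \<partial>LTr)"
    using w0 by (intro Bochner_Integration.integral_cong) (auto simp: abs_mult)
  finally have a: "u * \<bar>\<integral>x. w x * g x \<partial>LTr\<bar> \<le> u * (\<integral>x. w x * \<bar>g x\<bar> \<partial>LTr)"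
    using u by (rule mult_left_mono)
  have c: "(\<integral>x. w x \<partial>LTr) * \<Phi> u \<le> \<Phi> u"
    using mult_right_mono[OF W Nf_nonneg[OF Phi, of u]] by simp
  have d: "(\<integral>x. w x * (u * \<bar>g x\<bar> - \<Phi> u) \<partial>LTr) = u * (\<integral>x. w x * \<bar>g x\<bar> \<partial>LTr) - (\<integral>x. w x \<partial>LTr) * \<Phi> u"
  proof -
    have "(\<lambda>x. w x * (u * \<bar>g x\<bar> - \<Phi> u)) = (\<lambda>x. u * (w x * \<bar>g x\<bar>) - w x * \<Phi> u)"
      by (simp add: algebra_simps)
    thus ?thesis using wag w by simp
  qed
  have e: "(\<integral>x. w x * (u * \<bar>g x\<bar> - \<Phi> u) \<partial>LTr) \<le> (\<integral>x. w x * compl_N \<Phi> (g x) \<partial>LTr)"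
  proof (rule integral_mono)
    show "integrable LTr (\<lambda>x. w x * (u * \<bar>g x\<bar> - \<Phi> u))"
      using wag w by (simp add: right_diff_distrib mult_ac)
    show "integrable LTr (\<lambda>x. w x * compl_N \<Phi> (g x))" by (rule wpg)
    fix x assume "x \<in> space LTr"
    hence "w x \<ge> 0" using w0 by simp
    thus "w x * (u * \<bar>g x\<bar> - \<Phi> u) \<le> w x * compl_N \<Phi> (g x)"
      using psi_ge[OF Phi u, of "g x"] by (intro mult_left_mono)
  qed
  show "u * \<bar>\<integral>x. w x * g x \<partial>LTr\<bar> - \<Phi> u \<le> (\<integral>x. w x * compl_N \<Phi> (g x) \<partial>LTr)"
    using a c d e by linarith
qed

lemma D_LT[measurable]: assumes "q \<in> Kidx n" shows "Dbox n (fst q) (snd q) \<in> sets LTr"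
proof -
  have "Dbox n (fst q) (snd q) \<subseteq> triangle" using box_sub_cell cell_sub[OF assms] by blast
  thus ?thesis by (subst sets_restrict_space_iff) auto
qed

lemma D_meas_LT: assumes "q \<in> Kidx n" shows "emeasure LTr (Dbox n (fst q) (snd q)) = ennreal (1 / real (n+2)^2)"
proof -
  have "Dbox n (fst q) (snd q) \<subseteq> triangle" using box_sub_cell cell_sub[OF assms] by blast
  hence "emeasure LTr (Dbox n (fst q) (snd q)) = emeasure lebesgue (Dbox n (fst q) (snd q))"
    by (subst emeasure_restrict_space) (auto simp: Int_absorb2)
  also have "\<dots> = emeasure lborel (Dbox n (fst q) (snd q))" by simp
  finally show ?thesis by (simp add: Dbox_measure)
qed

lemma sum_single: assumes "finite F" "q0 \<in> F" "\<And>q. q \<in> F \<Longrightarrow> q \<noteq> q0 \<Longrightarrow> a q = 0"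
  shows "sum a F = a q0"
proof -
  have "sum a F = a q0 + sum a (F - {q0})" using assms by (simp add: sum.remove)
  also have "sum a (F - {q0}) = 0" using assms by (intro sum.neutral) auto
  finally show ?thesis by simp
qed

lemma psi_h: assumes Phi: "N_function \<Phi>"
  shows "ennreal (compl_N \<Phi> (\<Sum>q\<in>Kidx n. indicator (Dbox n (fst q) (snd q)) u * c q))
       = (\<Sum>q\<in>Kidx n. ennreal (compl_N \<Phi> (c q)) * indicator (Dbox n (fst q) (snd q)) u)"
proof (cases "\<exists>q0\<in>Kidx n. u \<in> Dbox n (fst q0) (snd q0)")
  case True
  then obtain q0 where q0: "q0 \<in> Kidx n" "u \<in> Dbox n (fst q0) (snd q0)" by auto
  have out: "u \<notin> Dbox n (fst q) (snd q)" if "q \<noteq> q0" for q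
    using Dbox_disj[of "fst q" "snd q" "fst q0" "snd q0" n] that q0(2) by (cases q; cases q0) auto
  have "(\<Sum>q\<in>Kidx n. indicator (Dbox n (fst q) (snd q)) u * c q) = indicator (Dbox n (fst q0) (snd q0)) u * c q0"
    by (rule sum_single[OF _ q0(1)]) (auto simp: out)
  moreover have "(\<Sum>q\<in>Kidx n. ennreal (compl_N \<Phi> (c q)) * indicator (Dbox n (fst q) (snd q)) u)
      = ennreal (compl_N \<Phi> (c q0)) * indicator (Dbox n (fst q0) (snd q0)) u"
    by (rule sum_single[OF _ q0(1)]) (auto simp: out)
  ultimately show ?thesis using q0(2) by simp
next
  case False
  hence "(\<Sum>q\<in>Kidx n. indicator (Dbox n (fst q) (snd q)) u * c q) = 0"
        "(\<Sum>q\<in>Kidx n. ennreal (compl_N \<Phi> (c q)) * indicator (Dbox n (fst q) (snd q)) u) = 0"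
    by (auto intro!: sum.neutral)
  thus ?thesis by (simp add: psi_zero[OF Phi])
qed

lemma norm_step:
  assumes Phi: "N_function \<Phi>" and ns: "2 * s < n" and f: "f \<in> orlicz_space \<Phi>"
    and gm: "g \<in> borel_measurable LTr" and gpsi: "(\<integral>\<^sup>+ x. ennreal (compl_N \<Phi> (g x)) \<partial>LTr) \<le> 1"
  shows "ereal \<bar>\<integral>x. stancu_kantorovich n s f x * g x \<partial>LTr\<bar> \<le> 12 * orlicz_norm \<Phi> f"
proof -
  define N2 where "N2 = (real (n+2))^2"
  have N2p: "N2 > 0" by (simp add: N2_def)
  define bq where "bq q x = b_tri n (fst q) (snd q) s x" for q x
  define \<beta> where "\<beta> q = (\<integral>x. bq q x * g x \<partial>LTr)" for q
  define c where "c q = N2 / 12 * \<beta> q" for q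
  define h where "h u = (\<Sum>q\<in>Kidx n. indicator (Dbox n (fst q) (snd q)) u * c q)" for u
  define \<Psi>g where "\<Psi>g x = compl_N \<Phi> (g x)" for x
  have fi: "integrable LTr f" by (rule orl_integrable[OF Phi f])
  have gi: "integrable LTr g" by (intro g_integrable[OF Phi gm] le_less_trans[OF gpsi]) simp
  have psim: "\<Psi>g \<in> borel_measurable LTr"
    unfolding \<Psi>g_def using measurable_compose[OF gm psi_meas[OF Phi]] by (simp add: comp_def)
  have psii: "integrable LTr \<Psi>g"
  proof (rule integrableI_bounded[OF psim])
    have "(\<integral>\<^sup>+ x. ennreal (norm (\<Psi>g x)) \<partial>LTr) = (\<integral>\<^sup>+ x. ennreal (compl_N \<Phi> (g x)) \<partial>LTr)"
      unfolding \<Psi>g_def using psi_nonneg[OF Phi] by simp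
    thus "(\<integral>\<^sup>+ x. ennreal (norm (\<Psi>g x)) \<partial>LTr) < \<infinity>" using gpsi by (simp add: le_less_trans[OF _ ennreal_less_top[of 1]])
  qed
  have psi_le1: "(\<integral>x. \<Psi>g x \<partial>LTr) \<le> 1"
  proof -
    have "ennreal (\<integral>x. \<Psi>g x \<partial>LTr) = (\<integral>\<^sup>+ x. ennreal (\<Psi>g x) \<partial>LTr)"
      using psii psi_nonneg[OF Phi] by (subst nn_integral_eq_integral) (auto simp: \<Psi>g_def)
    also have "\<dots> \<le> ennreal 1" using gpsi by (simp add: \<Psi>g_def)
    finally show ?thesis by simp
  qed
  have bqm[measurable]: "bq q \<in> borel_measurable LTr" for q unfolding bq_def by simp
  have bqg: "integrable LTr (\<lambda>x. bq q x * g x)" if "q \<in> Kidx n" for q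
    unfolding bq_def by (rule bg_int[OF gi that])
  have bqpsi: "integrable LTr (\<lambda>x. bq q x * \<Psi>g x)" if "q \<in> Kidx n" for q
    unfolding bq_def by (rule bg_int[OF psii that])
  have bqi: "integrable LTr (bq q)" if "q \<in> Kidx n" for q
  proof -
    interpret finite_measure LTr by (rule finite_LT)
    have "integrable LTr (\<lambda>x. bq q x * 1)" unfolding bq_def by (rule bg_int[OF integrable_const that])
    thus ?thesis by simp
  qed
  have bq0: "x \<in> triangle \<Longrightarrow> bq q x \<ge> 0" for q x unfolding bq_def by (rule b_nonneg)
  have stepi: "(\<integral>x. stancu_kantorovich n s f x * g x \<partial>LTr) = 12 * (\<Sum>q\<in>Kidx n. c q * Icell n q f)"
  proof -
    have "(\<lambda>x. stancu_kantorovich n s f x * g x) = (\<lambda>x. \<Sum>q\<in>Kidx n. N2 * Icell n q f * (bq q x * g x))"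
      unfolding K_sum bq_def N2_def by (simp add: sum_distrib_right sum_distrib_left mult_ac)
    hence "(\<integral>x. stancu_kantorovich n s f x * g x \<partial>LTr) = (\<Sum>q\<in>Kidx n. \<integral>x. N2 * Icell n q f * (bq q x * g x) \<partial>LTr)"
      using bqg by (simp add: integral_sum)
    also have "\<dots> = (\<Sum>q\<in>Kidx n. N2 * Icell n q f * \<beta> q)" unfolding \<beta>_def by simp
    also have "\<dots> = 12 * (\<Sum>q\<in>Kidx n. c q * Icell n q f)"
      unfolding c_def by (simp add: sum_distrib_left mult_ac)
    finally show ?thesis .
  qed
  have stepii: "(\<integral>x. f x * h x \<partial>LTr) = (\<Sum>q\<in>Kidx n. c q * Icell n q f)"
  proof -
    have "(\<lambda>x. f x * h x) = (\<lambda>x. \<Sum>q\<in>Kidx n. c q * (f x * indicator (Dbox n (fst q) (snd q)) x))"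
      unfolding h_def by (simp add: sum_distrib_left mult_ac del: sum_mult_indicator)
    moreover have "integrable LTr (\<lambda>x. f x * indicator (Dbox n (fst q) (snd q)) x)" if "q \<in> Kidx n" for q
      by (rule integrable_real_mult_indicator[OF D_LT[OF that] fi])
    ultimately have "(\<integral>x. f x * h x \<partial>LTr) = (\<Sum>q\<in>Kidx n. c q * (\<integral>x. f x * indicator (Dbox n (fst q) (snd q)) x \<partial>LTr))"
      by (simp add: integral_sum)
    also have "\<dots> = (\<Sum>q\<in>Kidx n. c q * Icell n q f)"
      by (intro sum.cong refl) (simp add: fD[OF fi])
    finally show ?thesis .
  qed
  have hm: "h \<in> borel_measurable LTr"
  proof -
    have "h \<in> borel_measurable borel" unfolding h_def by measurable
    thus ?thesis by (rule borel_LT)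
  qed
  have cle: "compl_N \<Phi> (c q) \<le> N2 / 12 * (\<integral>x. bq q x * \<Psi>g x \<partial>LTr)" if q: "q \<in> Kidx n" for q
  proof -
    define w where "w x = N2 / 12 * bq q x" for x
    have W: "(\<integral>x. w x \<partial>LTr) \<le> 1"
    proof -
      have "ennreal (\<integral>x. bq q x \<partial>LTr) = (\<integral>\<^sup>+ x. ennreal (bq q x) \<partial>LTr)"
        using bqi[OF q] by (subst nn_integral_eq_integral) (auto intro!: AE_I2 bq0)
      also have "\<dots> \<le> ennreal (3 / ((real (n-s) + 1) * (real (n-s) + 2)))"
        unfolding bq_def by (rule b_int)
      finally have "(\<integral>x. bq q x \<partial>LTr) \<le> 3 / ((real (n-s) + 1) * (real (n-s) + 2))"
        by (subst (asm) ennreal_le_iff) auto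
      hence "N2 / 12 * (\<integral>x. bq q x \<partial>LTr) \<le> N2 / 12 * (3 / ((real (n-s) + 1) * (real (n-s) + 2)))"
        using N2p by (intro mult_left_mono) auto
      also have "\<dots> \<le> 1"
      proof -
        have e: "N2 = (real n + 2)^2" unfolding N2_def by simp
        have "N2 * (3 / ((real (n-s) + 1) * (real (n-s) + 2))) \<le> 12"
          using mass_bound[OF ns] by (simp only: e)
        moreover have "N2 / 12 * (3 / ((real (n-s) + 1) * (real (n-s) + 2))) = N2 * (3 / ((real (n-s) + 1) * (real (n-s) + 2))) / 12"
          by simp
        ultimately show ?thesis using divide_right_mono[of "N2 * (3 / ((real (n-s) + 1) * (real (n-s) + 2)))" 12 12] by simp
      qed
      finally show ?thesis unfolding w_def by simp
    qed
    have "c q = (\<integral>x. w x * g x \<partial>LTr)" unfolding c_def \<beta>_def w_def by (simp add: mult.assoc)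
    also have "compl_N \<Phi> \<dots> \<le> (\<integral>x. w x * \<Psi>g x \<partial>LTr)" unfolding \<Psi>g_def
    proof (rule jensen_lite[OF Phi])
      show "integrable LTr w" unfolding w_def using bqi[OF q] by simp
      show "integrable LTr (\<lambda>x. w x * g x)" unfolding w_def using bqg[OF q] by (simp add: mult.assoc)
      show "integrable LTr (\<lambda>x. w x * compl_N \<Phi> (g x))" unfolding w_def using bqpsi[OF q] by (simp add: mult.assoc \<Psi>g_def)
      show "\<And>x. x \<in> triangle \<Longrightarrow> 0 \<le> w x" unfolding w_def using bq0 N2p by simp
      show "(\<integral>x. w x \<partial>LTr) \<le> 1" by (rule W)
    qed
    also have "\<dots> = N2 / 12 * (\<integral>x. bq q x * \<Psi>g x \<partial>LTr)" unfolding w_def by (simp add: mult.assoc)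
    finally show ?thesis .
  qed
  have sumle: "(\<Sum>q\<in>Kidx n. compl_N \<Phi> (c q) * (1 / N2)) \<le> 1"
  proof -
    have "(\<Sum>q\<in>Kidx n. compl_N \<Phi> (c q) * (1 / N2)) \<le> (\<Sum>q\<in>Kidx n. 1/12 * (\<integral>x. bq q x * \<Psi>g x \<partial>LTr))"
    proof (rule sum_mono)
      fix q assume q: "q \<in> Kidx n"
      have "compl_N \<Phi> (c q) * (1 / N2) \<le> N2 / 12 * (\<integral>x. bq q x * \<Psi>g x \<partial>LTr) * (1 / N2)"
        using cle[OF q] N2p by (intro mult_right_mono) auto
      thus "compl_N \<Phi> (c q) * (1 / N2) \<le> 1/12 * (\<integral>x. bq q x * \<Psi>g x \<partial>LTr)" using N2p by simp
    qed
    also have "\<dots> = 1/12 * (\<integral>x. (\<Sum>q\<in>Kidx n. bq q x) * \<Psi>g x \<partial>LTr)"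
      using bqpsi by (simp add: sum_distrib_left sum_distrib_right integral_sum)
    also have "(\<integral>x. (\<Sum>q\<in>Kidx n. bq q x) * \<Psi>g x \<partial>LTr) \<le> (\<integral>x. \<Psi>g x \<partial>LTr)"
    proof (rule integral_mono)
      show "integrable LTr (\<lambda>x. (\<Sum>q\<in>Kidx n. bq q x) * \<Psi>g x)"
        using bqpsi by (simp add: sum_distrib_right)
      show "integrable LTr \<Psi>g" by (rule psii)
      fix x assume "x \<in> space LTr"
      hence x: "x \<in> triangle" by simp
      have "(\<Sum>q\<in>Kidx n. bq q x) \<le> 1" unfolding bq_def by (rule b_sum_le[OF x])
      thus "(\<Sum>q\<in>Kidx n. bq q x) * \<Psi>g x \<le> \<Psi>g x"
        using mult_right_mono[OF _ psi_nonneg[OF Phi, of "g x"]] unfolding \<Psi>g_def by fastforce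
    qed
    finally show ?thesis using psi_le1 by simp
  qed
  have hpsi: "(\<integral>\<^sup>+ x. ennreal (compl_N \<Phi> (h x)) \<partial>LTr) \<le> 1"
  proof -
    have "(\<integral>\<^sup>+ x. ennreal (compl_N \<Phi> (h x)) \<partial>LTr)
        = (\<integral>\<^sup>+ x. (\<Sum>q\<in>Kidx n. ennreal (compl_N \<Phi> (c q)) * indicator (Dbox n (fst q) (snd q)) x) \<partial>LTr)"
      unfolding h_def by (simp only: psi_h[OF Phi])
    also have "\<dots> = (\<Sum>q\<in>Kidx n. ennreal (compl_N \<Phi> (c q)) * emeasure LTr (Dbox n (fst q) (snd q)))"
      by (subst nn_integral_sum) (auto simp: nn_integral_cmult_indicator)
    also have "\<dots> = (\<Sum>q\<in>Kidx n. ennreal (compl_N \<Phi> (c q) * (1 / N2)))"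
      by (intro sum.cong refl) (simp add: D_meas_LT N2_def ennreal_mult'[OF psi_nonneg[OF Phi], symmetric])
    also have "\<dots> = ennreal (\<Sum>q\<in>Kidx n. compl_N \<Phi> (c q) * (1 / N2))"
      using psi_nonneg[OF Phi] N2p by (intro sum_ennreal) simp
    also have "\<dots> \<le> ennreal 1" using sumle by simp
    finally show ?thesis by simp
  qed
  have "ereal \<bar>\<integral>x. f x * h x \<partial>LTr\<bar> \<le> orlicz_norm \<Phi> f"
    unfolding orlicz_norm_def by (rule SUP_upper) (use hm hpsi in auto)
  hence "12 * ereal \<bar>\<integral>x. f x * h x \<partial>LTr\<bar> \<le> 12 * orlicz_norm \<Phi> f"
    by (intro ereal_mult_left_mono) auto
  moreover have "ereal \<bar>\<integral>x. stancu_kantorovich n s f x * g x \<partial>LTr\<bar> = 12 * ereal \<bar>\<integral>x. f x * h x \<partial>LTr\<bar>"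
    using stepi stepii by simp
  ultimately show ?thesis by simp
qed

lemma K_meas: "stancu_kantorovich n s f \<in> borel_measurable borel"
  unfolding stancu_kantorovich_def by measurable

theorem lemma2:
  fixes \<Phi> :: "real \<Rightarrow> real" and n s :: nat
  assumes "N_function \<Phi>" and "n > 0" and "2 * s < n"
  shows "(\<forall>f \<in> orlicz_space \<Phi>. \<forall>g \<in> orlicz_space \<Phi>. \<forall>a b :: real. \<forall>x \<in> triangle.
            stancu_kantorovich n s (\<lambda>u. a * f u + b * g u) x
            = a * stancu_kantorovich n s f x + b * stancu_kantorovich n s g x)
       \<and> (\<forall>f \<in> orlicz_space \<Phi>.
            stancu_kantorovich n s f \<in> orlicz_space \<Phi> \<and>
            orlicz_norm \<Phi> (stancu_kantorovich n s f) \<le> 12 * orlicz_norm \<Phi> f)"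
proof (intro conjI ballI allI)
  fix f g a b x assume f: "f \<in> orlicz_space \<Phi>" and g: "g \<in> orlicz_space \<Phi>"
  have fi: "integrable LTr f" by (rule orl_integrable[OF assms(1) f])
  have gi: "integrable LTr g" by (rule orl_integrable[OF assms(1) g])
  have I: "Icell n q (\<lambda>u. a * f u + b * g u) = a * Icell n q f + b * Icell n q g" if q: "q \<in> Kidx n" for q
  proof -
    have sf: "set_integrable lebesgue (sq_cell n (fst q) (snd q)) (\<lambda>u. a * f u)"
      using cell_setint[OF fi q] by (rule set_integrable_mult_right)
    have sg: "set_integrable lebesgue (sq_cell n (fst q) (snd q)) (\<lambda>u. b * g u)"
      using cell_setint[OF gi q] by (rule set_integrable_mult_right)
    show ?thesis unfolding Icell_def by (simp add: set_integral_add(2)[OF sf sg])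
  qed
  show "stancu_kantorovich n s (\<lambda>u. a * f u + b * g u) x = a * stancu_kantorovich n s f x + b * stancu_kantorovich n s g x"
    unfolding K_sum by (simp add: I sum_distrib_left sum.distrib algebra_simps cong: sum.cong)
next
  fix f assume f: "f \<in> orlicz_space \<Phi>"
  have fi: "integrable LTr f" by (rule orl_integrable[OF assms(1) f])
  have Km: "stancu_kantorovich n s f \<in> borel_measurable LTr" by (rule borel_LT[OF K_meas])
  show "stancu_kantorovich n s f \<in> orlicz_space \<Phi>"
    unfolding orlicz_space_def
  proof (intro CollectI conjI ballI impI Km)
    fix g assume gm: "g \<in> borel_measurable LTr"
      and fin: "(\<integral>\<^sup>+ x. ennreal (compl_N \<Phi> (g x)) \<partial>LTr) < \<infinity>"
    have gi: "integrable LTr g" by (rule g_integrable[OF assms(1) gm fin])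
    have "integrable LTr (\<lambda>x. \<Sum>q\<in>Kidx n. (real (n+2))^2 * Icell n q f * (b_tri n (fst q) (snd q) s x * g x))"
      by (intro Bochner_Integration.integrable_sum integrable_mult_right bg_int[OF gi])
    moreover have "(\<lambda>x. \<Sum>q\<in>Kidx n. (real (n+2))^2 * Icell n q f * (b_tri n (fst q) (snd q) s x * g x))
        = (\<lambda>x. stancu_kantorovich n s f x * g x)"
      unfolding K_sum by (simp add: sum_distrib_right sum_distrib_left mult_ac)
    ultimately show "integrable LTr (\<lambda>x. stancu_kantorovich n s f x * g x)" by simp
  qed
  show "orlicz_norm \<Phi> (stancu_kantorovich n s f) \<le> 12 * orlicz_norm \<Phi> f"
    unfolding orlicz_norm_def[of \<Phi> "stancu_kantorovich n s f"]
  proof (rule SUP_least)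
    fix g assume "g \<in> {g \<in> borel_measurable LTr. (\<integral>\<^sup>+ x. ennreal (compl_N \<Phi> (g x)) \<partial>LTr) \<le> 1}"
    hence gm: "g \<in> borel_measurable LTr" and gp: "(\<integral>\<^sup>+ x. ennreal (compl_N \<Phi> (g x)) \<partial>LTr) \<le> 1" by auto
    show "ereal \<bar>\<integral>x. stancu_kantorovich n s f x * g x \<partial>LTr\<bar> \<le> 12 * orlicz_norm \<Phi> f"
      by (rule norm_step[OF assms(1) assms(3) f gm gp])
  qed
qed

end
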